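(* Let $\tau,\lambda$ be types of degree $d$. There exists an arrangement of $\tau$ into $\lambda$ if and only if $\lambda$ can be obtained from $\tau$ by a finite sequence of elementary forgets followed by a finite sequence of elementary merges. In particular $a(\tau,\lambda)>0$ if and only if $\tau\le\lambda$ in the partial order on types of degree $d$ generated by elementary merges and forgets.
   Context: A type of degree $d$ is a finite multiset of pairs $(b,m)$ of positive integers with $\sum bm=d$. For types $\tau=\{(b_1,m_1),\dots,(b_r,m_r)\}$ and $\lambda=\{(c_1,n_1),\dots,(c_s,n_s)\}$ (fixed orderings), an arrangement of $\tau$ into $\lambda$ is an $r\times s$ non-negative integer matrix $A$ with $A\vec n=\vec m$ and $A^T\vec b=\vec c$; $a(\tau,\lambda)$ is their number. Elementary merge: if two pairs $(d_1,m),(d_2,m)$ of $\tau$ have the same second entry, replace them by the single pair $(d_1+d_2,m)$. Elementary forget: replace a pair $(d_1,m_1)$ of $\tau$ by the two pairs $(d_1,m_1-a),(d_1,a)$ for some integer $0<a<m_1$. The partial order $\le$ on types of degree $d$ is: $\tau\le\lambda$ iff $\lambda$ is obtained from $\tau$ by a finite sequence of elementary merges and forgets. *)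

theory Defs
  imports Main "HOL-Library.Multiset" "HOL-Library.Product_Lexorder"
begin

definition is_type :: "nat \<Rightarrow> (nat \<times> nat) multiset \<Rightarrow> bool" where
  "is_type d tau \<longleftrightarrow> (\<forall>p \<in># tau. fst p > 0 \<and> snd p > 0)
      \<and> sum_mset (image_mset (\<lambda>(b, m). b * m) tau) = d"

text \<open>Arrangements of an ordered type ts = [(b_1,m_1),...,(b_r,m_r)] into
  ls = [(c_1,n_1),...,(c_s,n_s)]: r x s nonnegative integer matrices A (entries
  outside the r x s range are zero) with A n = m and A^T b = c.\<close>
definition arrangements_list ::
  "(nat \<times> nat) list \<Rightarrow> (nat \<times> nat) list \<Rightarrow> (nat \<Rightarrow> nat \<Rightarrow> nat) set" where
  "arrangements_list ts ls = {A.
      (\<forall>i j. (length ts \<le> i \<or> length ls \<le> j) \<longrightarrow> A i j = 0)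
    \<and> (\<forall>i < length ts. (\<Sum>j < length ls. A i j * snd (ls ! j)) = snd (ts ! i))
    \<and> (\<forall>j < length ls. (\<Sum>i < length ts. A i j * fst (ts ! i)) = fst (ls ! j))}"

definition arrangements ::
  "(nat \<times> nat) multiset \<Rightarrow> (nat \<times> nat) multiset \<Rightarrow> (nat \<Rightarrow> nat \<Rightarrow> nat) set" where
  "arrangements tau lam =
     arrangements_list (sorted_list_of_multiset tau) (sorted_list_of_multiset lam)"

definition arr_count :: "(nat \<times> nat) multiset \<Rightarrow> (nat \<times> nat) multiset \<Rightarrow> nat" where
  "arr_count tau lam = card (arrangements tau lam)"

definition elem_merge :: "(nat \<times> nat) multiset \<Rightarrow> (nat \<times> nat) multiset \<Rightarrow> bool" where
  "elem_merge tau tau' \<longleftrightarrow> (\<exists>d1 d2 m rho.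
      tau = rho + {#(d1, m), (d2, m)#} \<and> tau' = rho + {#(d1 + d2, m)#})"

definition elem_forget :: "(nat \<times> nat) multiset \<Rightarrow> (nat \<times> nat) multiset \<Rightarrow> bool" where
  "elem_forget tau tau' \<longleftrightarrow> (\<exists>d1 m1 a rho. 0 < a \<and> a < m1 \<and>
      tau = rho + {#(d1, m1)#} \<and> tau' = rho + {#(d1, m1 - a), (d1, a)#})"

definition type_le :: "(nat \<times> nat) multiset \<Rightarrow> (nat \<times> nat) multiset \<Rightarrow> bool" where
  "type_le tau lam \<longleftrightarrow> (\<lambda>x y. elem_merge x y \<or> elem_forget x y)\<^sup>*\<^sup>* tau lam"

end

theory Submission
  imports Defs "HOL-Combinatorics.List_Permutation"
begin


lemma sum_split_add: "(\<Sum>j<(a::nat)+b. f j) = (\<Sum>j<a. f j) + (\<Sum>j<b. f (a+j)::'b::comm_monoid_add)"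
  by (induction b) (simp_all add: add.assoc)

lemma arr_compose:
  assumes "A \<in> arrangements_list ts ms" "B \<in> arrangements_list ms ls"
  shows "(\<lambda>i j. \<Sum>k<length ms. A i k * B k j) \<in> arrangements_list ts ls"
proof -
  have A0: "\<And>i j. length ts \<le> i \<or> length ms \<le> j \<Longrightarrow> A i j = 0"
   and Ar: "\<And>i. i < length ts \<Longrightarrow> (\<Sum>j<length ms. A i j * snd (ms ! j)) = snd (ts ! i)"
   and Ac: "\<And>j. j < length ms \<Longrightarrow> (\<Sum>i<length ts. A i j * fst (ts ! i)) = fst (ms ! j)"
    using assms(1) unfolding arrangements_list_def by auto
  have B0: "\<And>i j. length ms \<le> i \<or> length ls \<le> j \<Longrightarrow> B i j = 0"
   and Br: "\<And>i. i < length ms \<Longrightarrow> (\<Sum>j<length ls. B i j * snd (ls ! j)) = snd (ms ! i)"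
   and Bc: "\<And>j. j < length ls \<Longrightarrow> (\<Sum>i<length ms. B i j * fst (ms ! i)) = fst (ls ! j)"
    using assms(2) unfolding arrangements_list_def by auto
  show ?thesis unfolding arrangements_list_def
  proof (intro CollectI conjI allI impI)
    fix i j assume "length ts \<le> i \<or> length ls \<le> j"
    then show "(\<Sum>k<length ms. A i k * B k j) = 0" using A0 B0 by auto
  next
    fix i assume i: "i < length ts"
    have "(\<Sum>j<length ls. (\<Sum>k<length ms. A i k * B k j) * snd (ls ! j))
        = (\<Sum>k<length ms. A i k * (\<Sum>j<length ls. B k j * snd (ls ! j)))"
      by (simp add: sum_distrib_left sum_distrib_right mult.assoc sum.swap[of _ "{..<length ls}"])
    also have "\<dots> = (\<Sum>k<length ms. A i k * snd (ms ! k))" using Br by simp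
    finally show "(\<Sum>j<length ls. (\<Sum>k<length ms. A i k * B k j) * snd (ls ! j)) = snd (ts ! i)"
      using Ar i by simp
  next
    fix j assume j: "j < length ls"
    have "(\<Sum>i<length ts. (\<Sum>k<length ms. A i k * B k j) * fst (ts ! i))
        = (\<Sum>k<length ms. B k j * (\<Sum>i<length ts. A i k * fst (ts ! i)))"
      by (simp add: sum_distrib_left sum_distrib_right mult.assoc mult.left_commute sum.swap[of _ "{..<length ts}"])
    also have "\<dots> = (\<Sum>k<length ms. B k j * fst (ms ! k))" using Ac by simp
    finally show "(\<Sum>i<length ts. (\<Sum>k<length ms. A i k * B k j) * fst (ts ! i)) = fst (ls ! j)"
      using Bc j by (simp add: mult.commute)
  qed
qed

lemma arr_perm:
  assumes "A \<in> arrangements_list ts ls" "mset ts' = mset ts" "mset ls' = mset ls"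
  shows "arrangements_list ts' ls' \<noteq> {}"
proof -
  obtain f where f: "bij_betw f {..<length ts'} {..<length ts}" "\<forall>i<length ts'. ts' ! i = ts ! (f i)"
    using permutation_Ex_bij[OF assms(2)] by blast
  obtain g where g: "bij_betw g {..<length ls'} {..<length ls}" "\<forall>i<length ls'. ls' ! i = ls ! (g i)"
    using permutation_Ex_bij[OF assms(3)] by blast
  have lt: "length ts' = length ts" "length ls' = length ls"
    using assms(2,3) by (metis size_mset)+
  have fi: "\<And>i. i < length ts \<Longrightarrow> f i < length ts" using f(1) lt unfolding bij_betw_def by auto
  have gi: "\<And>i. i < length ls \<Longrightarrow> g i < length ls" using g(1) lt unfolding bij_betw_def by auto
  have Ar: "\<And>i. i < length ts \<Longrightarrow> (\<Sum>j<length ls. A i j * snd (ls ! j)) = snd (ts ! i)"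
   and Ac: "\<And>j. j < length ls \<Longrightarrow> (\<Sum>i<length ts. A i j * fst (ts ! i)) = fst (ls ! j)"
    using assms(1) unfolding arrangements_list_def by auto
  let ?A = "\<lambda>i j. if i < length ts' \<and> j < length ls' then A (f i) (g j) else 0"
  have "?A \<in> arrangements_list ts' ls'" unfolding arrangements_list_def
  proof (intro CollectI conjI allI impI)
    fix i j assume "length ts' \<le> i \<or> length ls' \<le> j" then show "?A i j = 0" by auto
  next
    fix i assume i: "i < length ts'"
    have "(\<Sum>j<length ls'. ?A i j * snd (ls' ! j)) = (\<Sum>j<length ls'. A (f i) (g j) * snd (ls ! g j))"
      using i g(2) by (intro sum.cong) auto
    also have "\<dots> = (\<Sum>k<length ls. A (f i) k * snd (ls ! k))"
      using sum.reindex_bij_betw[OF g(1), of "\<lambda>k. A (f i) k * snd (ls ! k)"] by simp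
    also have "\<dots> = snd (ts' ! i)" using Ar fi i lt f(2) by simp
    finally show "(\<Sum>j<length ls'. ?A i j * snd (ls' ! j)) = snd (ts' ! i)" .
  next
    fix j assume j: "j < length ls'"
    have "(\<Sum>i<length ts'. ?A i j * fst (ts' ! i)) = (\<Sum>i<length ts'. A (f i) (g j) * fst (ts ! f i))"
      using j f(2) by (intro sum.cong) auto
    also have "\<dots> = (\<Sum>k<length ts. A k (g j) * fst (ts ! k))"
      using sum.reindex_bij_betw[OF f(1), of "\<lambda>k. A k (g j) * fst (ts ! k)"] by simp
    also have "\<dots> = fst (ls' ! j)" using Ac gi j lt g(2) by simp
    finally show "(\<Sum>i<length ts'. ?A i j * fst (ts' ! i)) = fst (ls' ! j)" .
  qed
  then show ?thesis by blast
qed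

lemma arr_block:
  assumes "A1 \<in> arrangements_list ts1 ls1" "A2 \<in> arrangements_list ts2 ls2"
  shows "arrangements_list (ts1 @ ts2) (ls1 @ ls2) \<noteq> {}"
proof -
  define r1 s1 r2 s2 where "r1 = length ts1" "s1 = length ls1" "r2 = length ts2" "s2 = length ls2"
  have A10: "\<And>i j. r1 \<le> i \<or> s1 \<le> j \<Longrightarrow> A1 i j = 0"
   and A1r: "\<And>i. i < r1 \<Longrightarrow> (\<Sum>j<s1. A1 i j * snd (ls1 ! j)) = snd (ts1 ! i)"
   and A1c: "\<And>j. j < s1 \<Longrightarrow> (\<Sum>i<r1. A1 i j * fst (ts1 ! i)) = fst (ls1 ! j)"
    using assms(1) unfolding arrangements_list_def r1_s1_r2_s2_def by auto
  have A20: "\<And>i j. r2 \<le> i \<or> s2 \<le> j \<Longrightarrow> A2 i j = 0"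
   and A2r: "\<And>i. i < r2 \<Longrightarrow> (\<Sum>j<s2. A2 i j * snd (ls2 ! j)) = snd (ts2 ! i)"
   and A2c: "\<And>j. j < s2 \<Longrightarrow> (\<Sum>i<r2. A2 i j * fst (ts2 ! i)) = fst (ls2 ! j)"
    using assms(2) unfolding arrangements_list_def r1_s1_r2_s2_def by auto
  let ?A = "\<lambda>i j. if i < r1 then (if j < s1 then A1 i j else 0)
                   else (if j < s1 then 0 else A2 (i - r1) (j - s1))"
  have "?A \<in> arrangements_list (ts1 @ ts2) (ls1 @ ls2)" unfolding arrangements_list_def
  proof (intro CollectI conjI allI impI)
    fix i j assume "length (ts1 @ ts2) \<le> i \<or> length (ls1 @ ls2) \<le> j"
    then have h: "r1 + r2 \<le> i \<or> s1 + s2 \<le> j" by (simp add: r1_s1_r2_s2_def)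
    show "?A i j = 0"
    proof (cases "i < r1")
      case True then show ?thesis using h A10[of i j] by auto
    next
      case False
      then have "\<not> j < s1 \<Longrightarrow> r2 \<le> i - r1 \<or> s2 \<le> j - s1" using h by linarith
      then show ?thesis using False A20[of "i - r1" "j - s1"] by auto
    qed
  next
    fix i assume i: "i < length (ts1 @ ts2)"
    show "(\<Sum>j<length (ls1 @ ls2). ?A i j * snd ((ls1 @ ls2) ! j)) = snd ((ts1 @ ts2) ! i)"
    proof (cases "i < r1")
      case True
      then show ?thesis using A1r[OF True]
        by (simp add: r1_s1_r2_s2_def[symmetric] sum_split_add nth_append)
    next
      case False
      then have "i - r1 < r2" using i by (simp add: r1_s1_r2_s2_def)
      then show ?thesis using A2r[of "i - r1"] False
        by (simp add: r1_s1_r2_s2_def[symmetric] sum_split_add nth_append)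
    qed
  next
    fix j assume j: "j < length (ls1 @ ls2)"
    show "(\<Sum>i<length (ts1 @ ts2). ?A i j * fst ((ts1 @ ts2) ! i)) = fst ((ls1 @ ls2) ! j)"
    proof (cases "j < s1")
      case True
      then show ?thesis using A1c[OF True]
        by (simp add: r1_s1_r2_s2_def[symmetric] sum_split_add nth_append)
    next
      case False
      then have "j - s1 < s2" using j by (simp add: r1_s1_r2_s2_def)
      then show ?thesis using A2c[of "j - s1"] False
        by (simp add: r1_s1_r2_s2_def[symmetric] sum_split_add nth_append)
    qed
  qed
  then show ?thesis by blast
qed

lemma if01: "(if P then 1 else 0) * (x::nat) = (if P then x else 0)" by simp

lemma arr_id: "(\<lambda>i j. if i = j \<and> i < length ts then 1 else 0) \<in> arrangements_list ts ts"
  unfolding arrangements_list_def by (auto simp only: if01 sum.delta sum.delta' finite_lessThan lessThan_iff) auto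

lemma arr_merge2: "arrangements_list [(d1,m),(d2,m)] [(d1+d2,m)] \<noteq> {}"
proof -
  have "(\<lambda>i j. if j = 0 \<and> i < 2 then 1 else 0) \<in> arrangements_list [(d1,m),(d2,m)] [(d1+d2,m)]"
    unfolding arrangements_list_def by (auto simp: numeral_2_eq_2 lessThan_Suc less_Suc_eq)
  then show ?thesis by blast
qed

lemma arr_forget2: "a < m \<Longrightarrow> arrangements_list [(d,m)] [(d,m-a),(d,a)] \<noteq> {}"
proof -
  assume "a < m"
  then have "(\<lambda>i j. if i = 0 \<and> j < 2 then 1 else 0) \<in> arrangements_list [(d,m)] [(d,m-a),(d,a)]"
    unfolding arrangements_list_def by (auto simp: numeral_2_eq_2 lessThan_Suc less_Suc_eq)
  then show ?thesis by blast
qed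



lemma forget_ctx: "elem_forget x y \<Longrightarrow> elem_forget (x + z) (y + z)"
proof -
  assume "elem_forget x y"
  then obtain d1 m1 a rho where h: "0 < a" "a < m1" "x = rho + {#(d1, m1)#}" "y = rho + {#(d1, m1 - a), (d1, a)#}"
    unfolding elem_forget_def by blast
  show ?thesis unfolding elem_forget_def
    by (rule exI[of _ d1], rule exI[of _ m1], rule exI[of _ a], rule exI[of _ "rho + z"]) (simp add: h)
qed

lemma merge_ctx: "elem_merge x y \<Longrightarrow> elem_merge (x + z) (y + z)"
proof -
  assume "elem_merge x y"
  then obtain d1 d2 m rho where h: "x = rho + {#(d1, m), (d2, m)#}" "y = rho + {#(d1 + d2, m)#}"
    unfolding elem_merge_def by blast
  show ?thesis unfolding elem_merge_def
    by (rule exI[of _ d1], rule exI[of _ d2], rule exI[of _ m], rule exI[of _ "rho + z"]) (simp add: h)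
qed

lemma forget_star_ctx: "elem_forget\<^sup>*\<^sup>* x y \<Longrightarrow> elem_forget\<^sup>*\<^sup>* (x + z) (y + z)"
  by (induction rule: rtranclp_induct) (auto intro: rtranclp.rtrancl_into_rtrancl forget_ctx)

lemma merge_star_ctx: "elem_merge\<^sup>*\<^sup>* x y \<Longrightarrow> elem_merge\<^sup>*\<^sup>* (x + z) (y + z)"
  by (induction rule: rtranclp_induct) (auto intro: rtranclp.rtrancl_into_rtrancl merge_ctx)

lemma forget_split:
  "(\<forall>n\<in>#N. n > 0) \<Longrightarrow> N \<noteq> {#} \<Longrightarrow>
     elem_forget\<^sup>*\<^sup>* {#(b, sum_mset N)#} (image_mset (\<lambda>n. (b, n)) N)"
proof (induction N)
  case empty then show ?case by simp
next
  case (add n N)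
  show ?case
  proof (cases "N = {#}")
    case True then show ?thesis by simp
  next
    case False
    then obtain x where x: "x \<in># N" by blast
    then have "sum_mset N = x + sum_mset (N - {#x#})" by (rule sum_mset.remove)
    moreover have "x > 0" using x add.prems by simp
    ultimately have pos: "sum_mset N > 0" by simp
    have n0: "n > 0" using add.prems by simp
    have s1: "elem_forget {#(b, n + sum_mset N)#} ({#(b, sum_mset N)#} + {#(b, n)#})"
      unfolding elem_forget_def
      by (rule exI[of _ b], rule exI[of _ "n + sum_mset N"], rule exI[of _ n], rule exI[of _ "{#}"])
         (use n0 pos in simp)
    have ih: "elem_forget\<^sup>*\<^sup>* {#(b, sum_mset N)#} (image_mset (\<lambda>n. (b, n)) N)"
      using add.IH add.prems False by simp
    have s2: "elem_forget\<^sup>*\<^sup>* ({#(b, sum_mset N)#} + {#(b, n)#}) (image_mset (\<lambda>n. (b, n)) N + {#(b, n)#})"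
      using forget_star_ctx[OF ih] .
    have "elem_forget\<^sup>*\<^sup>* {#(b, n + sum_mset N)#} (image_mset (\<lambda>n. (b, n)) N + {#(b, n)#})"
      using converse_rtranclp_into_rtranclp[OF s1 s2] .
    then show ?thesis by simp
  qed
qed

lemma merge_join:
  "K \<noteq> {#} \<Longrightarrow> elem_merge\<^sup>*\<^sup>* (image_mset (\<lambda>b. (b, n)) K) {#(sum_mset K, n)#}"
proof (induction K)
  case empty then show ?case by simp
next
  case (add b K)
  show ?case
  proof (cases "K = {#}")
    case True then show ?thesis by simp
  next
    case False
    have s1: "elem_merge\<^sup>*\<^sup>* (image_mset (\<lambda>b. (b, n)) K + {#(b, n)#}) ({#(sum_mset K, n)#} + {#(b,n)#})"
      using merge_star_ctx[OF add.IH[OF False]] .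
    have s2: "elem_merge ({#(sum_mset K, n)#} + {#(b,n)#}) {#(b + sum_mset K, n)#}"
      unfolding elem_merge_def
      by (rule exI[of _ b], rule exI[of _ "sum_mset K"], rule exI[of _ n], rule exI[of _ "{#}"]) simp
    show ?thesis using s1 s2 by (simp add: add.commute)
  qed
qed

lemma forget_sum: "finite I \<Longrightarrow> (\<forall>i\<in>I. elem_forget\<^sup>*\<^sup>* (X i) (Y i)) \<Longrightarrow>
   elem_forget\<^sup>*\<^sup>* (\<Sum>i\<in>I. X i) (\<Sum>i\<in>I. Y i)"
proof (induction I rule: finite_induct)
  case empty then show ?case by simp
next
  case (insert x F)
  have "elem_forget\<^sup>*\<^sup>* (X x + sum X F) (Y x + sum X F)" using forget_star_ctx insert.prems by simp
  moreover have "elem_forget\<^sup>*\<^sup>* (sum X F + Y x) (sum Y F + Y x)"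
    using forget_star_ctx insert.prems insert.IH by simp
  ultimately show ?case using insert.hyps by (simp add: add.commute)
qed

lemma merge_sum: "finite I \<Longrightarrow> (\<forall>i\<in>I. elem_merge\<^sup>*\<^sup>* (X i) (Y i)) \<Longrightarrow>
   elem_merge\<^sup>*\<^sup>* (\<Sum>i\<in>I. X i) (\<Sum>i\<in>I. Y i)"
proof (induction I rule: finite_induct)
  case empty then show ?case by simp
next
  case (insert x F)
  have "elem_merge\<^sup>*\<^sup>* (X x + sum X F) (Y x + sum X F)" using merge_star_ctx insert.prems by simp
  moreover have "elem_merge\<^sup>*\<^sup>* (sum X F + Y x) (sum Y F + Y x)"
    using merge_star_ctx insert.prems insert.IH by simp
  ultimately show ?case using insert.hyps by (simp add: add.commute)
qed

lemma mset_nth_sum: "mset xs = (\<Sum>i<length xs. {#xs ! i#})"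
  apply (induction xs)
   apply simp
  apply (simp only: length_Cons sum.lessThan_Suc_shift)
  apply simp
  done

lemma image_mset_sum': "image_mset f (\<Sum>i\<in>I. M i) = (\<Sum>i\<in>I. image_mset f (M i))"
  by (induction I rule: infinite_finite_induct) auto

lemma sum_mset_sum': "sum_mset (\<Sum>i\<in>I. M i) = (\<Sum>i\<in>I. sum_mset (M i))"
  by (induction I rule: infinite_finite_induct) auto



lemma in_sum_mset_ex: "finite I \<Longrightarrow> x \<in># (\<Sum>i\<in>I. M i) \<Longrightarrow> \<exists>i\<in>I. x \<in># M i"
  by (induction I rule: finite_induct) auto

lemma forg_part:
  fixes A :: "nat \<Rightarrow> nat \<Rightarrow> nat" and b m n :: "nat \<Rightarrow> nat"
  assumes Ar: "\<And>i. i < r \<Longrightarrow> (\<Sum>j<s. A i j * n j) = m i"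
    and mpos: "\<And>i. i < r \<Longrightarrow> m i > 0" and npos: "\<And>j. j < s \<Longrightarrow> n j > 0"
  shows "elem_forget\<^sup>*\<^sup>* (\<Sum>i<r. {#(b i, m i)#}) (\<Sum>i<r. \<Sum>j<s. replicate_mset (A i j) (b i, n j))"
proof (rule forget_sum[OF finite_lessThan], rule ballI)
  fix i assume i: "i \<in> {..<r}"
  define N where "N = (\<Sum>j<s. replicate_mset (A i j) (n j))"
  have sN: "sum_mset N = m i"
  proof -
    have "sum_mset N = (\<Sum>j<s. A i j * n j)" unfolding N_def sum_mset_sum' by simp
    then show ?thesis using Ar i by simp
  qed
  then have ne: "N \<noteq> {#}" using mpos[of i] i by auto
  have P: "\<forall>x\<in>#N. x > 0"
  proof
    fix x assume x: "x \<in># N"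
    have "x \<in># (\<Sum>j\<in>{..<s}. replicate_mset (A i j) (n j))" using x unfolding N_def .
    from in_sum_mset_ex[OF finite_lessThan this] obtain j where
      j: "j \<in> {..<s}" "x \<in># replicate_mset (A i j) (n j)" by blast
    from j(2) have "x = n j" unfolding in_replicate_mset by (rule conjunct2)
    then show "x > 0" using npos j(1) by simp
  qed
  have "elem_forget\<^sup>*\<^sup>* {#(b i, sum_mset N)#} (image_mset (\<lambda>x. (b i, x)) N)"
    by (rule forget_split[OF P ne])
  moreover have "image_mset (\<lambda>x. (b i, x)) N = (\<Sum>j<s. replicate_mset (A i j) (b i, n j))"
    unfolding N_def image_mset_sum' by simp
  ultimately show "elem_forget\<^sup>*\<^sup>* {#(b i, m i)#} (\<Sum>j<s. replicate_mset (A i j) (b i, n j))"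
    using sN by simp
qed

lemma merg_part:
  fixes A :: "nat \<Rightarrow> nat \<Rightarrow> nat" and b c n :: "nat \<Rightarrow> nat"
  assumes Ac: "\<And>j. j < s \<Longrightarrow> (\<Sum>i<r. A i j * b i) = c j"
    and cpos: "\<And>j. j < s \<Longrightarrow> c j > 0"
  shows "elem_merge\<^sup>*\<^sup>* (\<Sum>i<r. \<Sum>j<s. replicate_mset (A i j) (b i, n j)) (\<Sum>j<s. {#(c j, n j)#})"
proof -
  have sw: "(\<Sum>i<r. \<Sum>j<s. replicate_mset (A i j) (b i, n j)) = (\<Sum>j<s. \<Sum>i<r. replicate_mset (A i j) (b i, n j))"
    by (rule sum.swap)
  have "elem_merge\<^sup>*\<^sup>* (\<Sum>j<s. \<Sum>i<r. replicate_mset (A i j) (b i, n j)) (\<Sum>j<s. {#(c j, n j)#})"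
  proof (rule merge_sum[OF finite_lessThan], rule ballI)
    fix j assume j: "j \<in> {..<s}"
    define K where "K = (\<Sum>i<r. replicate_mset (A i j) (b i))"
    have sK: "sum_mset K = c j"
    proof -
      have "sum_mset K = (\<Sum>i<r. A i j * b i)" unfolding K_def sum_mset_sum' by simp
      then show ?thesis using Ac j by simp
    qed
    then have ne: "K \<noteq> {#}" using cpos[of j] j by auto
    have "elem_merge\<^sup>*\<^sup>* (image_mset (\<lambda>x. (x, n j)) K) {#(sum_mset K, n j)#}"
      by (rule merge_join[OF ne])
    moreover have "image_mset (\<lambda>x. (x, n j)) K = (\<Sum>i<r. replicate_mset (A i j) (b i, n j))"
      unfolding K_def image_mset_sum' by simp
    ultimately show "elem_merge\<^sup>*\<^sup>* (\<Sum>i<r. replicate_mset (A i j) (b i, n j)) {#(c j, n j)#}"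
      using sK by simp
  qed
  then show ?thesis unfolding sw .
qed

lemma construct:
  assumes A: "A \<in> arrangements_list ts ls"
    and pt: "\<forall>p\<in>set ts. fst p > 0 \<and> snd p > 0"
    and pl: "\<forall>p\<in>set ls. fst p > 0 \<and> snd p > 0"
  shows "\<exists>mu. elem_forget\<^sup>*\<^sup>* (mset ts) mu \<and> elem_merge\<^sup>*\<^sup>* mu (mset ls)"
proof -
  let ?r = "length ts" and ?s = "length ls"
  let ?b = "\<lambda>i. fst (ts ! i)" and ?m = "\<lambda>i. snd (ts ! i)"
  let ?c = "\<lambda>j. fst (ls ! j)" and ?n = "\<lambda>j. snd (ls ! j)"
  have Ar: "\<And>i. i < ?r \<Longrightarrow> (\<Sum>j<?s. A i j * ?n j) = ?m i"
   and Ac: "\<And>j. j < ?s \<Longrightarrow> (\<Sum>i<?r. A i j * ?b i) = ?c j"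
    using A unfolding arrangements_list_def by auto
  have mpos: "\<And>i. i < ?r \<Longrightarrow> ?m i > 0" using pt nth_mem by blast
  have cpos: "\<And>j. j < ?s \<Longrightarrow> ?c j > 0" using pl nth_mem by blast
  have npos: "\<And>j. j < ?s \<Longrightarrow> ?n j > 0" using pl nth_mem by blast
  have e1: "mset ts = (\<Sum>i<?r. {#(?b i, ?m i)#})" unfolding mset_nth_sum by simp
  have e2: "mset ls = (\<Sum>j<?s. {#(?c j, ?n j)#})" unfolding mset_nth_sum by simp
  show ?thesis unfolding e1 e2
    using forg_part[where r="length ts" and s="length ls" and A=A and n="\<lambda>j. snd (ls ! j)"
        and m="\<lambda>i. snd (ts ! i)" and b="\<lambda>i. fst (ts ! i)", OF Ar mpos npos]
      merg_part[where r="length ts" and s="length ls" and A=A and n="\<lambda>j. snd (ls ! j)"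
        and c="\<lambda>j. fst (ls ! j)" and b="\<lambda>i. fst (ts ! i)", OF Ac cpos]
    by blast
qed

lemma arr_finite:
  assumes pl: "\<forall>p\<in>set ls. snd p > 0"
  shows "finite (arrangements_list ts ls)"
proof -
  define r s M where "r = length ts" "s = length ls" "M = (\<Sum>i<length ts. snd (ts ! i))"
  let ?f = "\<lambda>g i j. if i < r \<and> j < s then g (i, j) else (0::nat)"
  have "arrangements_list ts ls \<subseteq> ?f ` PiE ({..<r} \<times> {..<s}) (\<lambda>_. {..M})"
  proof
    fix A assume A: "A \<in> arrangements_list ts ls"
    have A0: "\<And>i j. r \<le> i \<or> s \<le> j \<Longrightarrow> A i j = 0"
     and Ar: "\<And>i. i < r \<Longrightarrow> (\<Sum>j<s. A i j * snd (ls ! j)) = snd (ts ! i)"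
      using A unfolding arrangements_list_def r_s_M_def by auto
    have bd: "A i j \<le> M" if "i < r" "j < s" for i j
    proof -
      have "snd (ls ! j) > 0" using pl nth_mem that unfolding r_s_M_def by blast
      then have "A i j \<le> A i j * snd (ls ! j)" by simp
      also have "\<dots> \<le> (\<Sum>j<s. A i j * snd (ls ! j))"
        by (rule member_le_sum) (use that in auto)
      also have "\<dots> = snd (ts ! i)" using Ar that by simp
      also have "\<dots> \<le> M" unfolding r_s_M_def
        by (rule member_le_sum[where f="\<lambda>i. snd (ts ! i)"]) (use that r_s_M_def in auto)
      finally show ?thesis .
    qed
    let ?g = "restrict (\<lambda>p. A (fst p) (snd p)) ({..<r} \<times> {..<s})"
    have "A = ?f ?g"
    proof (intro ext)
      fix i j show "A i j = ?f ?g i j" using A0[of i j] by auto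
    qed
    moreover have "?g \<in> PiE ({..<r} \<times> {..<s}) (\<lambda>_. {..M})" using bd by auto
    ultimately show "A \<in> ?f ` PiE ({..<r} \<times> {..<s}) (\<lambda>_. {..M})" by blast
  qed
  moreover have "finite (PiE ({..<r} \<times> {..<s}) (\<lambda>_. {..M}))" by (intro finite_PiE) auto
  ultimately show ?thesis using finite_subset by blast
qed

definition R :: "(nat \<times> nat) multiset \<Rightarrow> (nat \<times> nat) multiset \<Rightarrow> bool" where
  "R tau lam \<longleftrightarrow> (\<exists>ts ls. mset ts = tau \<and> mset ls = lam \<and> arrangements_list ts ls \<noteq> {})"

lemma R_iff: "R tau lam \<longleftrightarrow> arrangements tau lam \<noteq> {}"
proof
  assume "R tau lam"
  then obtain ts ls A where "mset ts = tau" "mset ls = lam" "A \<in> arrangements_list ts ls"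
    unfolding R_def by blast
  then show "arrangements tau lam \<noteq> {}" unfolding arrangements_def
    by (intro arr_perm) auto
next
  assume "arrangements tau lam \<noteq> {}"
  then show "R tau lam" unfolding R_def arrangements_def
    by (intro exI[of _ "sorted_list_of_multiset tau"] exI[of _ "sorted_list_of_multiset lam"]) simp
qed

lemma R_refl: "R tau tau"
proof -
  obtain ts where "mset ts = tau" using ex_mset by blast
  then show ?thesis unfolding R_def using arr_id by blast
qed

lemma R_trans: assumes "R x y" "R y z" shows "R x z"
proof -
  obtain ts ms A where 1: "mset ts = x" "mset ms = y" "A \<in> arrangements_list ts ms"
    using assms(1) unfolding R_def by blast
  obtain ms' ls B where 2: "mset ms' = y" "mset ls = z" "B \<in> arrangements_list ms' ls"
    using assms(2) unfolding R_def by blast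
  have "arrangements_list ms ls \<noteq> {}" using arr_perm[OF 2(3)] 1 2 by auto
  then obtain B' where "B' \<in> arrangements_list ms ls" by blast
  from arr_compose[OF 1(3) this] 1 2 show ?thesis unfolding R_def by blast
qed

lemma R_merge: assumes "elem_merge x y" shows "R x y"
proof -
  obtain d1 d2 m rho where h: "x = rho + {#(d1, m), (d2, m)#}" "y = rho + {#(d1 + d2, m)#}"
    using assms unfolding elem_merge_def by blast
  obtain rs where rs: "mset rs = rho" using ex_mset by blast
  obtain A1 where A1: "A1 \<in> arrangements_list [(d1,m),(d2,m)] [(d1+d2,m)]" using arr_merge2 by blast
  have "arrangements_list ([(d1,m),(d2,m)] @ rs) ([(d1+d2,m)] @ rs) \<noteq> {}"
    by (rule arr_block[OF A1 arr_id])
  then show ?thesis unfolding R_def using h rs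
    by (intro exI[of _ "[(d1,m),(d2,m)] @ rs"] exI[of _ "[(d1+d2,m)] @ rs"]) simp
qed

lemma R_forget: assumes "elem_forget x y" shows "R x y"
proof -
  obtain d1 m1 a rho where h: "0 < a" "a < m1" "x = rho + {#(d1, m1)#}" "y = rho + {#(d1, m1 - a), (d1, a)#}"
    using assms unfolding elem_forget_def by blast
  obtain rs where rs: "mset rs = rho" using ex_mset by blast
  obtain A1 where A1: "A1 \<in> arrangements_list [(d1,m1)] [(d1,m1-a),(d1,a)]" using arr_forget2[OF h(2)] by blast
  have "arrangements_list ([(d1,m1)] @ rs) ([(d1,m1-a),(d1,a)] @ rs) \<noteq> {}"
    by (rule arr_block[OF A1 arr_id])
  then show ?thesis unfolding R_def using h rs
    by (intro exI[of _ "[(d1,m1)] @ rs"] exI[of _ "[(d1,m1-a),(d1,a)] @ rs"]) simp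
qed

lemma type_le_R: "type_le x y \<Longrightarrow> R x y"
  unfolding type_le_def
  by (induction rule: rtranclp_induct) (auto intro: R_refl R_trans R_merge R_forget)

lemma fm_type_le:
  assumes "elem_forget\<^sup>*\<^sup>* x mu" "elem_merge\<^sup>*\<^sup>* mu y" shows "type_le x y"
proof -
  have "(\<lambda>x y. elem_merge x y \<or> elem_forget x y)\<^sup>*\<^sup>* x mu"
    using assms(1) by (induction rule: rtranclp_induct) (auto intro: rtranclp.rtrancl_into_rtrancl)
  moreover have "(\<lambda>x y. elem_merge x y \<or> elem_forget x y)\<^sup>*\<^sup>* mu y"
    using assms(2) by (induction rule: rtranclp_induct) (auto intro: rtranclp.rtrancl_into_rtrancl)
  ultimately show ?thesis unfolding type_le_def by (rule rtranclp_trans)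
qed

theorem proposition4:
  fixes d :: nat and tau lam :: "(nat \<times> nat) multiset"
  assumes "is_type d tau" and "is_type d lam"
  shows "(arrangements tau lam \<noteq> {} \<longleftrightarrow>
            (\<exists>mu. elem_forget\<^sup>*\<^sup>* tau mu \<and> elem_merge\<^sup>*\<^sup>* mu lam))
       \<and> (arr_count tau lam > 0 \<longleftrightarrow> type_le tau lam)"
proof -
  have pt: "\<forall>p\<in>set (sorted_list_of_multiset tau). fst p > 0 \<and> snd p > 0"
    using assms(1) unfolding is_type_def by simp
  have pl: "\<forall>p\<in>set (sorted_list_of_multiset lam). fst p > 0 \<and> snd p > 0"
    using assms(2) unfolding is_type_def by simp
  have E1: "arrangements tau lam \<noteq> {} \<Longrightarrow> \<exists>mu. elem_forget\<^sup>*\<^sup>* tau mu \<and> elem_merge\<^sup>*\<^sup>* mu lam"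
  proof -
    assume "arrangements tau lam \<noteq> {}"
    then obtain A where "A \<in> arrangements tau lam" by blast
    from construct[OF this[unfolded arrangements_def] pt pl] show ?thesis by simp
  qed
  have E2: "type_le tau lam \<Longrightarrow> arrangements tau lam \<noteq> {}"
    using type_le_R R_iff by blast
  have fin: "finite (arrangements tau lam)"
    unfolding arrangements_def using pl by (intro arr_finite) auto
  have "arr_count tau lam > 0 \<longleftrightarrow> arrangements tau lam \<noteq> {}"
    unfolding arr_count_def using fin by (simp add: card_gt_0_iff)
  then show ?thesis using E1 E2 fm_type_le by blast
qed

end
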